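(* $\mathfrak{P}_4=\mathfrak{S}_4$. That is, for a real vector $(c_\lambda)_{\lambda\vdash 4}$, the symmetric quartic $\sum_{\lambda\vdash 4}c_\lambda p^{(n)}_\lambda$ is nonnegative on $\mathbb{R}^n$ for every $n\ge 4$ if and only if it is a sum of squares of real forms for every $n\ge 4$.
   Context: For $n\ge 1$, $i\ge1$ let $p_i^{(n)}=\frac1n(x_1^i+\dots+x_n^i)$, and for a partition $\lambda=(\lambda_1,\dots,\lambda_l)$ of $4$ let $p^{(n)}_\lambda=\prod_i p^{(n)}_{\lambda_i}$. The partitions of $4$ are $(4),(3,1),(2,2),(2,1,1),(1,1,1,1)$. $\mathfrak{P}_4$ (resp. $\mathfrak{S}_4$) is the set of $(c_\lambda)\in\mathbb{R}^5$ such that $\sum_\lambda c_\lambda p^{(n)}_\lambda$ is nonnegative (resp. a sum of squares) for all $n\ge 4$. *)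

theory Defs
  imports Main Complex_Main
begin

text \<open>Points of R^n are represented as functions x :: nat => real, of which only
  the coordinates x 0, ..., x (n-1) are used.\<close>

definition psum :: "nat \<Rightarrow> nat \<Rightarrow> (nat \<Rightarrow> real) \<Rightarrow> real" where
  "psum n i x = (1 / real n) * (\<Sum>k<n. x k ^ i)"

text \<open>p_lambda^(n) = product of p_(lambda_i)^(n); partitions are lists of parts.\<close>
definition psum_part :: "nat \<Rightarrow> nat list \<Rightarrow> (nat \<Rightarrow> real) \<Rightarrow> real" where
  "psum_part n lam x = prod_list (map (\<lambda>i. psum n i x) lam)"

definition partitions4 :: "nat list list" where
  "partitions4 = [[4], [3,1], [2,2], [2,1,1], [1,1,1,1]]"

definition sym_quartic :: "(nat list \<Rightarrow> real) \<Rightarrow> nat \<Rightarrow> (nat \<Rightarrow> real) \<Rightarrow> real" where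
  "sym_quartic c n x = (\<Sum>lam\<leftarrow>partitions4. c lam * psum_part n lam x)"

text \<open>Coefficient vectors are functions on partitions4 (extended by 0 elsewhere),
  so that the sets below are genuinely subsets of R^5.\<close>
definition coeff_vecs :: "(nat list \<Rightarrow> real) set" where
  "coeff_vecs = {c. \<forall>lam. lam \<notin> set partitions4 \<longrightarrow> c lam = 0}"

definition is_sos_quartic :: "nat \<Rightarrow> ((nat \<Rightarrow> real) \<Rightarrow> real) \<Rightarrow> bool" where
  "is_sos_quartic n f \<longleftrightarrow>
     (\<exists>(m::nat) (A :: nat \<Rightarrow> nat \<Rightarrow> nat \<Rightarrow> real).
        \<forall>x. f x = (\<Sum>j<m. (\<Sum>i<n. \<Sum>k<n. A j i k * x i * x k) ^ 2))"

definition P4 :: "(nat list \<Rightarrow> real) set" where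
  "P4 = {c \<in> coeff_vecs. \<forall>n\<ge>4. \<forall>x. 0 \<le> sym_quartic c n x}"

definition S4 :: "(nat list \<Rightarrow> real) set" where
  "S4 = {c \<in> coeff_vecs. \<forall>n\<ge>4. is_sos_quartic n (sym_quartic c n)}"

end

theory Submission imports Defs begin

lemma sq_unfold: "sym_quartic c n x = c [4] * psum n 4 x + c [3,1] * (psum n 3 x * psum n 1 x)
  + c [2,2]*(psum n 2 x * psum n 2 x) + c[2,1,1]*(psum n 2 x*(psum n 1 x*psum n 1 x))
  + c[1,1,1,1]*(psum n 1 x*(psum n 1 x*(psum n 1 x*psum n 1 x)))"
  by (simp add: sym_quartic_def partitions4_def psum_part_def)

lemma cm_id: fixes P1 P2 P3 P4 c4 c31 c22 c211 c1111 :: real shows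
"c4*P4 + c31*(P3*P1) + c22*(P2*P2) + c211*(P2*(P1*P1)) + c1111*(P1*(P1*(P1*P1)))
 = c4*(P4-4*P1*P3+6*P1^2*P2-3*P1^4) + c22*(P2-P1^2)^2 + (4*c4+c31)*P1*(P3-3*P1*P2+2*P1^3)
   + (6*c4+3*c31+2*c22+c211)*P1^2*(P2-P1^2) + (c4+c31+c22+c211+c1111)*P1^4"
  by algebra

definition quadf :: "nat \<Rightarrow> ((nat \<Rightarrow> real) \<Rightarrow> real) \<Rightarrow> bool" where
  "quadf n q \<longleftrightarrow> (\<exists>M. \<forall>x. q x = (\<Sum>i<n. \<Sum>k<n. M i k * x i * x k))"
definition linf :: "nat \<Rightarrow> ((nat \<Rightarrow> real) \<Rightarrow> real) \<Rightarrow> bool" where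
  "linf n l \<longleftrightarrow> (\<exists>v. \<forall>x. l x = (\<Sum>i<n. v i * x i))"

lemma linf_coord: assumes "j < n" shows "linf n (\<lambda>x. x j)"
  unfolding linf_def
proof (intro exI allI)
  fix x :: "nat \<Rightarrow> real"
  have "(\<Sum>i<n. (if i = j then 1 else 0) * x i) = (\<Sum>i<n. if i = j then x i else 0)"
    by (rule sum.cong) auto
  also have "\<dots> = x j" using assms by simp
  finally show "x j = (\<Sum>i<n. (if i = j then 1 else 0) * x i)" by simp
qed

lemma linf_mean: "linf n (\<lambda>x. psum n 1 x)"
  unfolding linf_def psum_def by (rule exI[of _ "\<lambda>i. 1 / real n"]) (simp add: sum_distrib_left)

lemma linf_diff: "linf n f \<Longrightarrow> linf n g \<Longrightarrow> linf n (\<lambda>x. f x - g x)"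
  unfolding linf_def
  apply clarify
  subgoal for v w by (rule exI[of _ "\<lambda>i. v i - w i"]) (simp add: left_diff_distrib sum_subtractf)
  done

lemma quadf_mult: "linf n f \<Longrightarrow> linf n g \<Longrightarrow> quadf n (\<lambda>x. f x * g x)"
  unfolding linf_def quadf_def
  apply clarify
  subgoal for v w by (rule exI[of _ "\<lambda>i k. v i * w k"]) (simp add: sum_product mult_ac)
  done

lemma quadf_add: "quadf n f \<Longrightarrow> quadf n g \<Longrightarrow> quadf n (\<lambda>x. f x + g x)"
  unfolding quadf_def
  apply clarify
  subgoal for v w by (rule exI[of _ "\<lambda>i k. v i k + w i k"]) (simp add: distrib_right sum.distrib)
  done

lemma quadf_scale: "quadf n f \<Longrightarrow> quadf n (\<lambda>x. c * f x)"
  unfolding quadf_def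
  apply clarify
  subgoal for v by (rule exI[of _ "\<lambda>i k. c * v i k"]) (simp add: sum_distrib_left mult_ac)
  done

lemma quadf_diff: "quadf n f \<Longrightarrow> quadf n g \<Longrightarrow> quadf n (\<lambda>x. f x - g x)"
  using quadf_add[of n f "\<lambda>x. (-1) * g x"] quadf_scale[of n g "-1"] by simp

lemma quadf_zero: "quadf n (\<lambda>x. 0)"
  unfolding quadf_def by (rule exI[of _ "\<lambda>i k. 0"]) simp

lemma quadf_sum: "(\<And>k. k < (m::nat) \<Longrightarrow> quadf n (f k)) \<Longrightarrow> quadf n (\<lambda>x. \<Sum>k<m. f k x)"
proof (induction m)
  case 0 then show ?case by (simp add: quadf_zero)
next
  case (Suc m) then show ?case by (simp add: quadf_add)
qed

abbreviation sos where "sos \<equiv> is_sos_quartic"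

lemma sos_zero: "sos n (\<lambda>x. 0)"
  unfolding is_sos_quartic_def by (rule exI[of _ 0]) simp

lemma sos_sq: "quadf n q \<Longrightarrow> sos n (\<lambda>x. (q x)^2)"
  unfolding is_sos_quartic_def quadf_def
  apply clarify
  subgoal for M by (rule exI[of _ 1], rule exI[of _ "\<lambda>j. M"]) simp
  done

lemma sum_split_add: "(\<Sum>j<m1+m2. F j) = (\<Sum>j<m1. F j) + (\<Sum>j<m2. F (m1+j))"
  for F :: "nat \<Rightarrow> real"
  by (induction m2) auto

lemma sos_add: assumes "sos n f" "sos n g" shows "sos n (\<lambda>x. f x + g x)"
proof -
  from assms(1) obtain m1 :: nat and A1 :: "nat \<Rightarrow> nat \<Rightarrow> nat \<Rightarrow> real" where
    f: "\<forall>x. f x = (\<Sum>j<m1. (\<Sum>i<n. \<Sum>k<n. A1 j i k * x i * x k) ^ 2)"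
    unfolding is_sos_quartic_def by blast
  from assms(2) obtain m2 :: nat and A2 :: "nat \<Rightarrow> nat \<Rightarrow> nat \<Rightarrow> real" where
    g: "\<forall>x. g x = (\<Sum>j<m2. (\<Sum>i<n. \<Sum>k<n. A2 j i k * x i * x k) ^ 2)"
    unfolding is_sos_quartic_def by blast
  define A where "A = (\<lambda>j. if j < m1 then A1 j else A2 (j - m1))"
  show ?thesis unfolding is_sos_quartic_def
  proof (intro exI allI)
    fix x
    have "(\<Sum>j<m1+m2. (\<Sum>i<n. \<Sum>k<n. A j i k * x i * x k) ^ 2)
       = (\<Sum>j<m1. (\<Sum>i<n. \<Sum>k<n. A j i k * x i * x k) ^ 2) + (\<Sum>j<m2. (\<Sum>i<n. \<Sum>k<n. A (m1+j) i k * x i * x k) ^ 2)"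
      by (rule sum_split_add)
    also have "\<dots> = f x + g x" using f g by (simp add: A_def)
    finally show "f x + g x = (\<Sum>j<m1+m2. (\<Sum>i<n. \<Sum>k<n. A j i k * x i * x k) ^ 2)" by simp
  qed
qed

lemma sos_scale: assumes "sos n f" "c \<ge> 0" shows "sos n (\<lambda>x. c * f x)"
proof -
  from assms(1) obtain m :: nat and A :: "nat \<Rightarrow> nat \<Rightarrow> nat \<Rightarrow> real" where
    f: "\<forall>x. f x = (\<Sum>j<m. (\<Sum>i<n. \<Sum>k<n. A j i k * x i * x k) ^ 2)"
    unfolding is_sos_quartic_def by blast
  show ?thesis unfolding is_sos_quartic_def
  proof (intro exI allI)
    fix x
    have "c * f x = (\<Sum>j<m. c * (\<Sum>i<n. \<Sum>k<n. A j i k * x i * x k) ^ 2)"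
      using f by (simp add: sum_distrib_left)
    also have "\<dots> = (\<Sum>j<m. (sqrt c * (\<Sum>i<n. \<Sum>k<n. A j i k * x i * x k)) ^ 2)"
      using assms(2) by (simp add: power_mult_distrib)
    also have "\<dots> = (\<Sum>j<m. (\<Sum>i<n. \<Sum>k<n. (sqrt c * A j i k) * x i * x k) ^ 2)"
      by (simp add: sum_distrib_left mult_ac)
    finally show "c * f x = \<dots>" .
  qed
qed

lemma sos_sum: "(\<And>k. k < (m::nat) \<Longrightarrow> sos n (f k)) \<Longrightarrow> sos n (\<lambda>x. \<Sum>k<m. f k x)"
proof (induction m)
  case 0 then show ?case by (simp add: sos_zero)
next
  case (Suc m) then show ?case by (simp add: sos_add)
qed


lemma sum_exp2: "(\<Sum>k<n. (x k - a)^2) = (\<Sum>k<n. x k^2) - 2*a*(\<Sum>k<n. x k) + real n * a^2"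
  for x :: "nat \<Rightarrow> real"
proof -
  have "\<And>k. (x k - a)^2 = x k^2 - 2*a*x k + a^2" by algebra
  then show ?thesis by (simp add: sum.distrib sum_subtractf sum_distrib_left)
qed

lemma sum_exp3: "(\<Sum>k<n. (x k - a)^3) = (\<Sum>k<n. x k^3) - 3*a*(\<Sum>k<n. x k^2) + 3*a^2*(\<Sum>k<n. x k) - real n * a^3"
  for x :: "nat \<Rightarrow> real"
proof -
  have "\<And>k. (x k - a)^3 = x k^3 - 3*a*x k^2 + 3*a^2*x k - a^3" by algebra
  then show ?thesis by (simp add: sum.distrib sum_subtractf sum_distrib_left)
qed

lemma sum_exp4: "(\<Sum>k<n. (x k - a)^4) = (\<Sum>k<n. x k^4) - 4*a*(\<Sum>k<n. x k^3) + 6*a^2*(\<Sum>k<n. x k^2) - 4*a^3*(\<Sum>k<n. x k) + real n * a^4"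
  for x :: "nat \<Rightarrow> real"
proof -
  have "\<And>k. (x k - a)^4 = x k^4 - 4*a*x k^3 + 6*a^2*x k^2 - 4*a^3*x k + a^4" by algebra
  then show ?thesis by (simp add: sum.distrib sum_subtractf sum_distrib_left)
qed

lemma sum_pow: "n > 0 \<Longrightarrow> (\<Sum>k<n. x k ^ j) = real n * psum n j x"
  by (simp add: psum_def)

definition cm :: "nat \<Rightarrow> nat \<Rightarrow> (nat \<Rightarrow> real) \<Rightarrow> real" where
  "cm n j x = (1 / real n) * (\<Sum>k<n. (x k - psum n 1 x)^j)"

lemma cm_vals:
  assumes "n > 0"
  shows "cm n 2 x = psum n 2 x - psum n 1 x ^2"
    "cm n 3 x = psum n 3 x - 3 * psum n 1 x * psum n 2 x + 2 * psum n 1 x^3"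
    "cm n 4 x = psum n 4 x - 4 * psum n 1 x * psum n 3 x + 6 * psum n 1 x^2 * psum n 2 x - 3 * psum n 1 x ^4"
    "(\<Sum>k<n. x k - psum n 1 x) = 0"
proof -
  have s1: "(\<Sum>k<n. x k) = real n * psum n 1 x" using sum_pow[OF assms, of x 1] by simp
  have s: "\<And>j. (\<Sum>k<n. x k ^ j) = real n * psum n j x" using sum_pow[OF assms] by simp
  have nz: "real n \<noteq> 0" using assms by simp
  show "cm n 2 x = psum n 2 x - psum n 1 x ^2"
    unfolding cm_def sum_exp2 s1 s using nz by (simp add: field_simps power2_eq_square)
  show "cm n 3 x = psum n 3 x - 3 * psum n 1 x * psum n 2 x + 2 * psum n 1 x^3"
    unfolding cm_def sum_exp3 s1 s using nz by (simp add: field_simps power2_eq_square power3_eq_cube)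
  show "cm n 4 x = psum n 4 x - 4 * psum n 1 x * psum n 3 x + 6 * psum n 1 x^2 * psum n 2 x - 3 * psum n 1 x ^4"
    unfolding cm_def sum_exp4 s1 s using nz by (simp add: field_simps power_numeral_reduce)
  show "(\<Sum>k<n. x k - psum n 1 x) = 0"
    using s1 by (simp add: sum_subtractf)
qed


lemma f_cm: assumes "n > 0"
  shows "sym_quartic c n x = c[4] * cm n 4 x + c[2,2] * (cm n 2 x)^2
     + (4*c[4]+c[3,1]) * psum n 1 x * cm n 3 x
     + (6*c[4]+3*c[3,1]+2*c[2,2]+c[2,1,1]) * psum n 1 x^2 * cm n 2 x
     + (c[4]+c[3,1]+c[2,2]+c[2,1,1]+c[1,1,1,1]) * psum n 1 x^4"
  unfolding sq_unfold cm_id cm_vals[OF assms] ..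

lemma T1_id: assumes "n > 0"
  shows "(\<Sum>k<n. (1/real n) * ((x k - psum n 1 x)^2 - cm n 2 x + t * (psum n 1 x * (x k - psum n 1 x)))^2)
    = cm n 4 x - (cm n 2 x)^2 + 2*t*psum n 1 x * cm n 3 x + t^2 * psum n 1 x^2 * cm n 2 x"
proof -
  define a where "a = psum n 1 x"
  define Q where "Q = cm n 2 x"
  have S1: "(\<Sum>k<n. x k - a) = 0" using cm_vals(4)[OF assms] a_def by simp
  have S1': "(\<Sum>k<n. x k) = real n * a" using S1 by (simp add: sum_subtractf)
  have S2: "(\<Sum>k<n. (x k - a)^2) = real n * Q" using assms unfolding Q_def cm_def a_def by simp
  have S3: "(\<Sum>k<n. (x k - a)^3) = real n * cm n 3 x" using assms unfolding cm_def a_def by simp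
  have S4: "(\<Sum>k<n. (x k - a)^4) = real n * cm n 4 x" using assms unfolding cm_def a_def by simp
  have e: "\<And>k. ((x k - a)^2 - Q + t * (a * (x k - a)))^2
     = (x k - a)^4 + Q^2 + (t^2*a^2 - 2*Q) * (x k - a)^2 + (2*t*a) * (x k - a)^3 - (2*t*a*Q) * (x k - a)"
    by algebra
  have "(\<Sum>k<n. ((x k - a)^2 - Q + t * (a * (x k - a)))^2)
      = (\<Sum>k<n. (x k - a)^4) + real n * Q^2 + (t^2*a^2 - 2*Q) * (\<Sum>k<n. (x k - a)^2)
        + (2*t*a) * (\<Sum>k<n. (x k - a)^3) - (2*t*a*Q) * (\<Sum>k<n. x k - a)"
    unfolding e by (simp only: sum.distrib sum_subtractf flip: sum_distrib_left) simp
  also have "\<dots> = real n * (cm n 4 x - Q^2 + 2*t*a * cm n 3 x + t^2 * a^2 * Q)"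
    unfolding S1 S2 S3 S4 by (simp add: algebra_simps power2_eq_square)
  finally have "(\<Sum>k<n. ((x k - a)^2 - Q + t * (a * (x k - a)))^2) = real n * (cm n 4 x - Q^2 + 2*t*a * cm n 3 x + t^2 * a^2 * Q)" .
  then show ?thesis using assms unfolding a_def[symmetric] Q_def[symmetric]
    by (simp add: sum_divide_distrib[symmetric])
qed

lemma quadf_cm2: "quadf n (\<lambda>x. cm n 2 x)"
proof -
  have "quadf n (\<lambda>x. (1 / real n) * (\<Sum>k<n. (x k - psum n 1 x) * (x k - psum n 1 x)))"
    by (intro quadf_scale quadf_sum quadf_mult linf_diff linf_coord linf_mean) auto
  then show ?thesis unfolding cm_def by (simp add: power2_eq_square)
qed

lemma quadf_a2: "quadf n (\<lambda>x. psum n 1 x ^ 2)"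
  using quadf_mult[OF linf_mean linf_mean, of n] by (simp add: power2_eq_square)


lemma sos_main:
  fixes c :: "nat list \<Rightarrow> real" and n :: nat
  defines "\<alpha> \<equiv> c[4]" and "\<beta> \<equiv> c[2,2]" and "\<gamma> \<equiv> 4*c[4]+c[3,1]"
    and "\<delta> \<equiv> 6*c[4]+3*c[3,1]+2*c[2,2]+c[2,1,1]"
    and "\<epsilon> \<equiv> c[4]+c[3,1]+c[2,2]+c[2,1,1]+c[1,1,1,1]"
  assumes n: "n > 0" and h\<alpha>: "\<alpha> \<ge> 0" and h\<gamma>: "\<alpha> = 0 \<longrightarrow> \<gamma> = 0" and hA: "\<alpha> + \<beta> \<ge> 0"
    and h\<epsilon>: "\<epsilon> \<ge> 0"
    and hB: "\<delta> - \<gamma>^2/(4*\<alpha>) < 0 \<longrightarrow> (\<delta> - \<gamma>^2/(4*\<alpha>))^2 \<le> 4 * (\<alpha>+\<beta>) * \<epsilon>"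
  shows "sos n (sym_quartic c n)"
proof -
  define t where "t = \<gamma> / (2*\<alpha>)"
  define A where "A = \<alpha> + \<beta>"
  define B where "B = \<delta> - \<gamma>^2/(4*\<alpha>)"
  define a where "a = (\<lambda>x. psum n 1 x)"
  define Q where "Q = (\<lambda>x. cm n 2 x)"
  define T1 where "T1 = (\<lambda>x. \<Sum>k<n. (1/real n) * ((x k - psum n 1 x)^2 - cm n 2 x + t * (psum n 1 x * (x k - psum n 1 x)))^2)"
  define T3 where "T3 = (\<lambda>x. \<Sum>k<n. (1/real n) * (psum n 1 x * (x k - psum n 1 x))^2)"
  have h1: "\<alpha> * t = \<gamma> / 2" using h\<alpha> h\<gamma> unfolding t_def by (cases "\<alpha> = 0") auto
  have h2: "\<alpha> * t^2 = \<gamma>^2 / (4*\<alpha>)" using h\<alpha> h\<gamma> unfolding t_def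
    by (cases "\<alpha> = 0") (auto simp: power2_eq_square field_simps)
  have qk: "quadf n (\<lambda>x. (x k - psum n 1 x)^2 - cm n 2 x + t * (psum n 1 x * (x k - psum n 1 x)))"
    if "k < n" for k
  proof -
    have l: "linf n (\<lambda>x. x k - psum n 1 x)" using that by (intro linf_diff linf_coord linf_mean)
    have "quadf n (\<lambda>x. (x k - psum n 1 x)*(x k - psum n 1 x) - cm n 2 x + t * (psum n 1 x * (x k - psum n 1 x)))"
      by (intro quadf_add quadf_diff quadf_scale quadf_mult[OF l l] quadf_cm2 quadf_mult[OF linf_mean l])
    then show ?thesis by (simp add: power2_eq_square)
  qed
  have sT1: "sos n T1" unfolding T1_def
    by (intro sos_sum sos_scale sos_sq qk) auto
  have sT3: "sos n T3" unfolding T3_def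
    by (intro sos_sum sos_scale sos_sq quadf_mult linf_diff linf_coord linf_mean) auto
  have T3v: "T3 x = a x ^2 * Q x" for x
  proof -
    have "T3 x = a x^2 * ((1/real n) * (\<Sum>k<n. (x k - psum n 1 x)^2))"
      unfolding T3_def a_def by (simp add: power_mult_distrib sum_distrib_left mult_ac)
    then show ?thesis unfolding Q_def cm_def .
  qed
  have T1v: "T1 x = cm n 4 x - (Q x)^2 + 2*t*a x * cm n 3 x + t^2 * a x^2 * Q x" for x
    unfolding T1_def a_def Q_def using T1_id[OF n] .
  have key: "sym_quartic c n x = \<alpha> * T1 x + A * (Q x)^2 + B * T3 x + \<epsilon> * (a x^2)^2" for x
  proof -
    have "\<alpha> * T1 x = \<alpha> * cm n 4 x - \<alpha> * (Q x)^2 + 2*(\<alpha>*t)*a x * cm n 3 x + (\<alpha>*t^2) * a x^2 * Q x"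
      unfolding T1v by (simp add: algebra_simps)
    also have "\<dots> = \<alpha> * cm n 4 x - \<alpha> * (Q x)^2 + \<gamma> *a x * cm n 3 x + \<gamma>^2/(4*\<alpha>) * a x^2 * Q x"
      unfolding h1 h2 by simp
    finally have e: "\<alpha> * T1 x = \<dots>" .
    show ?thesis unfolding f_cm[OF n] e T3v A_def B_def
      by (simp add: a_def Q_def \<alpha>_def \<beta>_def \<gamma>_def \<delta>_def \<epsilon>_def algebra_simps power_numeral_reduce)
  qed
  have sQ: "sos n (\<lambda>x. (Q x)^2)" unfolding Q_def by (rule sos_sq[OF quadf_cm2])
  have sa: "sos n (\<lambda>x. (a x^2)^2)" unfolding a_def by (rule sos_sq[OF quadf_a2])
  have "sos n (\<lambda>x. \<alpha> * T1 x + A * (Q x)^2 + B * T3 x + \<epsilon> * (a x^2)^2)"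
  proof (cases "B \<ge> 0")
    case True
    then show ?thesis using sT1 sT3 sQ sa h\<alpha> hA h\<epsilon> unfolding A_def
      by (intro sos_add sos_scale) auto
  next
    case False
    then have B2: "B^2 \<le> 4 * A * \<epsilon>" using hB unfolding A_def B_def by auto
    have Apos: "A > 0"
    proof (rule ccontr)
      assume "\<not> A > 0" then have "A = 0" using hA A_def by auto
      then have "B^2 \<le> 0" using B2 by simp
      then show False using False by (smt (verit) zero_less_power2)
    qed
    have q5: "quadf n (\<lambda>x. Q x + (B/(2*A)) * a x^2)"
      unfolding Q_def a_def by (intro quadf_add quadf_scale quadf_cm2 quadf_a2)
    have e: "\<alpha> * T1 x + A * (Q x)^2 + B * T3 x + \<epsilon> * (a x^2)^2
      = \<alpha> * T1 x + A * (Q x + (B/(2*A)) * a x^2)^2 + (\<epsilon> - B^2/(4*A)) * (a x^2)^2" for x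
      using Apos unfolding T3v by (simp add: field_simps power2_eq_square)
    have c0: "\<epsilon> - B^2/(4*A) \<ge> 0" using B2 Apos by (simp add: field_simps)
    have "sos n (\<lambda>x. \<alpha> * T1 x + A * (Q x + (B/(2*A)) * a x^2)^2 + (\<epsilon> - B^2/(4*A)) * (a x^2)^2)"
      using sT1 sos_sq[OF q5] sa h\<alpha> Apos c0 by (intro sos_add sos_scale) auto
    then show ?thesis unfolding e .
  qed
  moreover have "sym_quartic c n = (\<lambda>x. \<alpha> * T1 x + A * (Q x)^2 + B * T3 x + \<epsilon> * (a x^2)^2)"
    using key by (intro ext) 
  ultimately show ?thesis by simp
qed


lemma sum_if_split: "(\<Sum>i<n. if i < k then U else V) = real (min n k) * U + real (n - k) * V"
proof (induction n)
  case 0 then show ?case by simp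
next
  case (Suc n)
  then show ?case
    by (cases "n < k") (auto simp: min_def Suc_diff_le algebra_simps)
qed

definition Phi :: "(nat list \<Rightarrow> real) \<Rightarrow> real \<Rightarrow> real \<Rightarrow> real \<Rightarrow> real" where
  "Phi c p u v = (let P = (\<lambda>j::nat. p * u^j + (1-p) * v^j) in
     c [4] * P 4 + c [3,1] * (P 3 * P 1) + c [2,2]*(P 2 * P 2) + c[2,1,1]*(P 2*(P 1*P 1))
     + c[1,1,1,1]*(P 1*(P 1*(P 1*P 1))))"

lemma psum_two: assumes "n > 0" "k \<le> n"
  shows "psum n j (\<lambda>i. if i < k then u else v) = (real k / real n) * u^j + (1 - real k / real n) * v^j"
proof -
  have "(\<Sum>i<n. (if i < k then u else v)^j) = (\<Sum>i<n. if i < k then u^j else v^j)"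
    by (rule sum.cong) auto
  also have "\<dots> = real k * u^j + real (n - k) * v^j" using assms by (simp add: sum_if_split)
  finally show ?thesis using assms unfolding psum_def by (simp add: field_simps of_nat_diff)
qed

lemma Phi_rat: assumes "n > 0" "k \<le> n"
  shows "sym_quartic c n (\<lambda>i. if i < k then u else v) = Phi c (real k / real n) u v"
  unfolding sq_unfold Phi_def psum_two[OF assms] Let_def ..

lemma Phi_cont: "isCont (\<lambda>p. Phi c p u v) p0"
  unfolding Phi_def Let_def by (intro continuous_intros)

lemma Phi_nonneg:
  assumes P: "\<forall>n\<ge>4. \<forall>x. 0 \<le> sym_quartic c n x" and p: "0 < p0" "p0 < 1"
  shows "Phi c p0 u v \<ge> 0"
proof (rule ccontr)
  assume "\<not> Phi c p0 u v \<ge> 0"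
  then have neg: "Phi c p0 u v < 0" by simp
  have "((\<lambda>p. Phi c p u v) \<longlongrightarrow> Phi c p0 u v) (at p0)"
    using Phi_cont isCont_def by blast
  then have "eventually (\<lambda>p. Phi c p u v < 0) (at p0)"
    using neg by (rule order_tendstoD)
  then obtain d where d: "d > 0" "\<And>p. p \<noteq> p0 \<Longrightarrow> dist p p0 < d \<Longrightarrow> Phi c p u v < 0"
    unfolding eventually_at by blast
  define e where "e = min d (1 - p0)"
  have e: "e > 0" using d p unfolding e_def by simp
  obtain q where q: "q \<in> \<rat>" "p0 < q" "q < p0 + e" using Rats_dense_in_real[of p0 "p0+e"] e by auto
  have qneg: "Phi c q u v < 0" using d(2)[of q] q e_def by (auto simp: dist_real_def)
  have q01: "0 < q" "q < 1" using q p e_def by auto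
  obtain m n where mn: "n \<noteq> 0" "\<bar>q\<bar> = real m / real n"
    using Rats_abs_nat_div_natE[OF q(1)] by metis
  have qv: "q = real (4*m) / real (4*n)" using mn q01 by simp
  have le: "4*m \<le> 4*n"
  proof -
    have "real m / real n < 1" using mn q01 by simp
    then have "real m < real n" using mn by (simp add: divide_less_eq)
    then show ?thesis by simp
  qed
  have "sym_quartic c (4*n) (\<lambda>i. if i < 4*m then u else v) = Phi c q u v"
    unfolding qv using mn le by (intro Phi_rat) auto
  moreover have "0 \<le> sym_quartic c (4*n) (\<lambda>i. if i < 4*m then u else v)"
    using P mn by auto
  ultimately show False using qneg by simp
qed


lemma Phi_central:
  fixes a D p :: real
  defines "w \<equiv> p*(1-p)"
  shows "Phi c p (a + (1-p)*D) (a - p*D) = c[4] * (w*(1-3*w)*D^4) + c[2,2] * (w*D^2)^2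
     + (4*c[4]+c[3,1]) * a * (w*(1-2*p)*D^3)
     + (6*c[4]+3*c[3,1]+2*c[2,2]+c[2,1,1]) * a^2 * (w*D^2)
     + (c[4]+c[3,1]+c[2,2]+c[2,1,1]+c[1,1,1,1]) * a^4"
proof -
  define P where "P = (\<lambda>j::nat. p * (a + (1-p)*D)^j + (1-p) * (a - p*D)^j)"
  have P1: "P 1 = a" unfolding P_def by (simp add: algebra_simps)
  have P2: "P 2 - P 1^2 = w*D^2" unfolding P_def w_def by algebra
  have P3: "P 3 - 3*P 1*P 2 + 2*P 1^3 = w*(1-2*p)*D^3" unfolding P_def w_def by algebra
  have P4: "P 4 - 4*P 1*P 3 + 6*P 1^2*P 2 - 3*P 1^4 = w*(1-3*w)*D^4" unfolding P_def w_def by algebra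
  have "Phi c p (a + (1-p)*D) (a - p*D) = c[4]*(P 4-4*P 1*P 3+6*P 1^2*P 2-3*P 1^4) + c[2,2]*(P 2-P 1^2)^2 + (4*c[4]+c[3,1])*P 1*(P 3-3*P 1*P 2+2*P 1^3)
   + (6*c[4]+3*c[3,1]+2*c[2,2]+c[2,1,1])*P 1^2*(P 2-P 1^2) + (c[4]+c[3,1]+c[2,2]+c[2,1,1]+c[1,1,1,1])*P 1^4"
    unfolding Phi_def Let_def P_def[symmetric] cm_id ..
  then show ?thesis unfolding P2[unfolded P1] P3[unfolded P1] P4[unfolded P1] P1 .
qed

lemma H_nonneg:
  fixes c :: "nat list \<Rightarrow> real"
  assumes P: "\<forall>n\<ge>4. \<forall>x. 0 \<le> sym_quartic c n x"
  shows "0 \<le> c[4] * (s^2+1) + c[2,2] + (4*c[4]+c[3,1]) * a * s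
     + (6*c[4]+3*c[3,1]+2*c[2,2]+c[2,1,1]) * a^2
     + (c[4]+c[3,1]+c[2,2]+c[2,1,1]+c[1,1,1,1]) * a^4"
proof -
  define r where "r = sqrt (s^2+4)"
  have r2: "r^2 = s^2+4" unfolding r_def by simp
  have rpos: "r > 0" unfolding r_def by (simp add: add_nonneg_pos)
  have sr: "\<bar>s\<bar> < r" unfolding r_def by (rule real_less_rsqrt) simp
  define p where "p = (1 - s/r)/2"
  have p01: "0 < p" "p < 1" using sr rpos unfolding p_def by (auto simp: field_simps abs_less_iff)
  have ne: "s*s+4 \<noteq> 0" by (smt (verit) zero_le_square)
  have w: "p*(1-p) * r^2 = 1" unfolding p_def using rpos r2 ne by (simp add: field_simps power2_eq_square)
  have d: "(1-2*p) * r = s" unfolding p_def using rpos by (simp add: field_simps)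
  have "0 \<le> Phi c p (a + (1-p)*r) (a - p*r)" by (rule Phi_nonneg[OF P p01])
  also have "Phi c p (a + (1-p)*r) (a - p*r) = c[4] * (s^2+1) + c[2,2] + (4*c[4]+c[3,1]) * a * s
     + (6*c[4]+3*c[3,1]+2*c[2,2]+c[2,1,1]) * a^2
     + (c[4]+c[3,1]+c[2,2]+c[2,1,1]+c[1,1,1,1]) * a^4"
  proof -
    have e2: "p*(1-p)*r^2 = 1" by (rule w)
    have e3: "p*(1-p)*(1-2*p)*r^3 = s"
    proof -
      have "p*(1-p)*(1-2*p)*r^3 = (p*(1-p)*r^2)*((1-2*p)*r)" by algebra
      then show ?thesis using w d by simp
    qed
    have e4: "p*(1-p)*(1-3*(p*(1-p)))*r^4 = s^2+1"
    proof -
      have "p*(1-p)*(1-3*(p*(1-p)))*r^4 = (p*(1-p)*r^2) * r^2 - 3 * (p*(1-p)*r^2)^2"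
        by algebra
      then show ?thesis using w r2 by simp
    qed
    have "(p*(1-p)*r^2)^2 = 1" using w by simp
    then show ?thesis unfolding Phi_central e2 e3 e4 by simp
  qed
  finally show ?thesis .
qed


lemma conds:
  fixes c :: "nat list \<Rightarrow> real"
  defines "\<alpha> \<equiv> c[4]" and "\<beta> \<equiv> c[2,2]" and "\<gamma> \<equiv> 4*c[4]+c[3,1]"
    and "\<delta> \<equiv> 6*c[4]+3*c[3,1]+2*c[2,2]+c[2,1,1]"
    and "\<epsilon> \<equiv> c[4]+c[3,1]+c[2,2]+c[2,1,1]+c[1,1,1,1]"
  assumes P: "\<forall>n\<ge>4. \<forall>x. 0 \<le> sym_quartic c n x"
  shows "\<alpha> \<ge> 0" "\<alpha> = 0 \<longrightarrow> \<gamma> = 0" "\<alpha> + \<beta> \<ge> 0" "\<epsilon> \<ge> 0"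
    "\<delta> - \<gamma>^2/(4*\<alpha>) < 0 \<longrightarrow> (\<delta> - \<gamma>^2/(4*\<alpha>))^2 \<le> 4 * (\<alpha>+\<beta>) * \<epsilon>"
proof -
  have H: "\<And>s a. 0 \<le> \<alpha> * (s^2+1) + \<beta> + \<gamma> * a * s + \<delta> * a^2 + \<epsilon> * a^4"
    unfolding \<alpha>_def \<beta>_def \<gamma>_def \<delta>_def \<epsilon>_def by (rule H_nonneg[OF P])
  have c1: "\<And>j. psum 4 j (\<lambda>_. 1) = 1" by (simp add: psum_def)
  have "0 \<le> sym_quartic c 4 (\<lambda>_. 1)" using P by auto
  then show he: "\<epsilon> \<ge> 0" unfolding sq_unfold c1 \<epsilon>_def by simp
  show hA: "\<alpha> + \<beta> \<ge> 0" using H[of 0 0] by simp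
  show ha: "\<alpha> \<ge> 0"
  proof (rule ccontr)
    assume "\<not> \<alpha> \<ge> 0" then have neg: "\<alpha> < 0" by simp
    define s where "s = sqrt ((\<bar>\<alpha>+\<beta>\<bar>+1)/(-\<alpha>))"
    have "(\<bar>\<alpha>+\<beta>\<bar>+1)/(-\<alpha>) \<ge> 0" using neg by (intro divide_nonneg_pos) auto
    then have "s^2 = (\<bar>\<alpha>+\<beta>\<bar>+1)/(-\<alpha>)" unfolding s_def by simp
    then have "\<alpha> * s^2 = -(\<bar>\<alpha>+\<beta>\<bar>+1)" using neg by (simp add: field_simps)
    then show False using H[of s 0] by (simp add: algebra_simps)
  qed
  show "\<alpha> = 0 \<longrightarrow> \<gamma> = 0"
  proof
    assume a0: "\<alpha> = 0"
    show "\<gamma> = 0"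
    proof (rule ccontr)
      assume g: "\<gamma> \<noteq> 0"
      have "0 \<le> \<beta> + \<gamma> * (-(\<beta>+\<delta>+\<epsilon>+1)/\<gamma>) + \<delta> + \<epsilon>"
        using H[of "-(\<beta>+\<delta>+\<epsilon>+1)/\<gamma>" 1] a0 by simp
      then show False using g by simp
    qed
  qed
  show "\<delta> - \<gamma>^2/(4*\<alpha>) < 0 \<longrightarrow> (\<delta> - \<gamma>^2/(4*\<alpha>))^2 \<le> 4 * (\<alpha>+\<beta>) * \<epsilon>"
  proof
    define B where "B = \<delta> - \<gamma>^2/(4*\<alpha>)"
    assume "\<delta> - \<gamma>^2/(4*\<alpha>) < 0"
    then have Bn: "B < 0" unfolding B_def .
    have G: "0 \<le> (\<alpha>+\<beta>) + B * t + \<epsilon> * t^2" if t: "t \<ge> 0" for t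
    proof -
      define a where "a = sqrt t"
      have a2: "a^2 = t" unfolding a_def using t by simp
      define s where "s = - \<gamma> * a / (2*\<alpha>)"
      have "\<alpha> * (s^2+1) + \<beta> + \<gamma> * a * s + \<delta> * a^2 + \<epsilon> * a^4 = (\<alpha>+\<beta>) + B * a^2 + \<epsilon> * (a^2)^2"
      proof (cases "\<alpha> = 0")
        case True
        then have "\<gamma> = 0" using \<open>\<alpha> = 0 \<longrightarrow> \<gamma> = 0\<close> by simp
        then show ?thesis using True unfolding B_def s_def by (simp add: power_numeral_reduce)
      next
        case False
        then show ?thesis unfolding B_def s_def by (simp add: field_simps power2_eq_square power_numeral_reduce)
      qed
      then show ?thesis using H[of s a] a2 by simp
    qed
    show "(\<delta> - \<gamma>^2/(4*\<alpha>))^2 \<le> 4 * (\<alpha>+\<beta>) * \<epsilon>"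
      unfolding B_def[symmetric]
    proof (cases "\<epsilon> = 0")
      case True
      have t0: "(\<alpha>+\<beta>+1)/(-B) \<ge> 0" using hA Bn by (intro divide_nonneg_pos) auto
      have m: "B * ((\<alpha>+\<beta>+1)/(-B)) = -(\<alpha>+\<beta>+1)" using Bn by simp
      have "0 \<le> (\<alpha>+\<beta>) + B * ((\<alpha>+\<beta>+1)/(-B)) + \<epsilon> * ((\<alpha>+\<beta>+1)/(-B))^2"
        by (rule G[OF t0])
      then have False unfolding m using True by simp
      then show "B^2 \<le> 4 * (\<alpha>+\<beta>) * \<epsilon>" by blast
    next
      case False
      then have ep: "\<epsilon> > 0" using he by simp
      have "0 \<le> (\<alpha>+\<beta>) + B * (-B/(2*\<epsilon>)) + \<epsilon> * (-B/(2*\<epsilon>))^2"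
        using Bn ep by (intro G) (simp add: divide_nonpos_pos)
      then have "0 \<le> (\<alpha>+\<beta>) - B^2/(4*\<epsilon>)" using ep by (simp add: field_simps power2_eq_square)
      then show "B^2 \<le> 4 * (\<alpha>+\<beta>) * \<epsilon>" using ep by (simp add: field_simps)
    qed
  qed
qed

theorem theorem1p3:
  shows "P4 = S4"
proof
  show "P4 \<subseteq> S4"
  proof
    fix c assume c: "c \<in> P4"
    then have P: "\<forall>n\<ge>4. \<forall>x. 0 \<le> sym_quartic c n x" and cv: "c \<in> coeff_vecs" unfolding P4_def by auto
    have "sos n (sym_quartic c n)" if "n \<ge> 4" for n
      using that conds[OF P] by (intro sos_main) auto
    then show "c \<in> S4" using cv unfolding S4_def by auto
  qed
next
  show "S4 \<subseteq> P4"
  proof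
    fix c assume c: "c \<in> S4"
    have "0 \<le> sym_quartic c n x" if "n \<ge> 4" for n x
    proof -
      from c that obtain m :: nat and A :: "nat \<Rightarrow> nat \<Rightarrow> nat \<Rightarrow> real" where
        "\<forall>x. sym_quartic c n x = (\<Sum>j<m. (\<Sum>i<n. \<Sum>k<n. A j i k * x i * x k) ^ 2)"
        unfolding S4_def is_sos_quartic_def by blast
      then show ?thesis by (simp add: sum_nonneg)
    qed
    then show "c \<in> P4" using c unfolding S4_def P4_def by auto
  qed
qed

end
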